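(* Let $q\ge2$, $n\ge1$, and let $U$ be a $q\times q$ row-stochastic matrix. Given an $L$-sized ID code with deterministic decoders $\{(Q_j,\mathcal{D}_j):j=1,\dots,L\}$ for the noisy permutation channel $\Sigma_{n,U}$ with Type-I and Type-II error probabilities $\lambda_1,\lambda_2$, there exists an $L$-sized ID code $\{(Q_i',P_i):i=1,\dots,L\}$ with stochastic decoders for the $q$-ary noisy composition channel $q$-NCC$_{n,U}$ having the same error probabilities $\lambda_{i\to j}$ for all $i\ne j$ and $\lambda_{i\not\to i}$ for all $i$ (in particular the same $\lambda_1,\lambda_2$). Moreover, if each $Q_i$ is a point mass (deterministic encoder), then each $Q_i'$ is also a point mass.
   Context: $\Sigma_{n,U}$: input $\mathbf{x}\in[1:q]^n$, permuted by a uniformly random permutation of $[1:n]$, then each coordinate passed independently through the DMC $U$; $P_\Sigma(\mathbf{y}|\mathbf{x})=\frac1{n!}\sum_\sigma\prod_iU(y_i|x_{\sigma^{-1}(i)})$. The composition of $\mathbf{x}$ is $(N(1|\mathbf{x}),\dots,N(q|\mathbf{x}))$ with $N(c|\mathbf{x})=|\{i:x_i=c\}|$; $\mathcal{N}_{q,n}$ is the set of compositions of vectors in $[1:q]^n$. $q$-NCC$_{n,U}$ has input and output alphabet $\mathcal{N}_{q,n}$ and $P_{q\text{-NC}}(\mathbf{w}|\mathbf{t})=\sum_{\mathbf{z}:\text{ composition } \mathbf{w}}\prod_iU(z_i|x_i)$ for any $\mathbf{x}$ of composition $\mathbf{t}$. ID codes for a channel $P$ from $\mathcal{A}$ to $\mathcal{B}$: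 pairs $(Q_i,P_i)$ with $Q_i$ a distribution on $\mathcal{A}$ and $P_i(1|y)\in[0,1]$, $P_i(0|y)=1-P_i(1|y)$ (deterministic decoders: $P_i(1|y)=\mathbb{1}\{y\in\mathcal{D}_i\}$). $\lambda_{i\to j}=\sum_{x,y}Q_i(x)P(y|x)P_j(1|y)$, $\lambda_{i\not\to i}=\sum_{x,y}Q_i(x)P(y|x)P_i(0|y)$, $\lambda_1=\max_i\lambda_{i\not\to i}$, $\lambda_2=\max_{i\ne j}\lambda_{i\to j}$. *)

theory Defs
  imports Complex_Main "HOL-Combinatorics.Permutations"
begin

text \<open>Alphabet [1:q]; vectors in [1:q]^n are lists of length n (positions 0..n-1).
  A DMC U is given by U x y = U(y|x) (row x = input symbol).\<close>

definition row_stochastic :: "nat \<Rightarrow> (nat \<Rightarrow> nat \<Rightarrow> real) \<Rightarrow> bool" where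
  "row_stochastic q U \<longleftrightarrow>
     (\<forall>x\<in>{1..q}. (\<forall>y\<in>{1..q}. U x y \<ge> 0) \<and> (\<Sum>y\<in>{1..q}. U x y) = 1)"

definition vecs :: "nat \<Rightarrow> nat \<Rightarrow> nat list set" where
  "vecs q n = {xs. length xs = n \<and> set xs \<subseteq> {1..q}}"

definition composition :: "nat list \<Rightarrow> (nat \<Rightarrow> nat)" where
  "composition xs = count_list xs"

definition comps :: "nat \<Rightarrow> nat \<Rightarrow> (nat \<Rightarrow> nat) set" where
  "comps q n = composition ` vecs q n"

definition perm_chan :: "nat \<Rightarrow> (nat \<Rightarrow> nat \<Rightarrow> real) \<Rightarrow> nat list \<Rightarrow> nat list \<Rightarrow> real" where
  "perm_chan n U x y = (1 / fact n) *
     (\<Sum>\<sigma>\<in>{\<sigma>. \<sigma> permutes {..<n}}. \<Prod>i<n. U (x ! inv \<sigma> i) (y ! i))"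

definition ncc_chan :: "nat \<Rightarrow> nat \<Rightarrow> (nat \<Rightarrow> nat \<Rightarrow> real) \<Rightarrow> (nat \<Rightarrow> nat) \<Rightarrow> (nat \<Rightarrow> nat) \<Rightarrow> real" where
  "ncc_chan q n U t w =
     (let x = (SOME x. x \<in> vecs q n \<and> composition x = t)
      in \<Sum>z\<in>{z\<in>vecs q n. composition z = w}. \<Prod>i<n. U (x ! i) (z ! i))"

text \<open>ID codes for a channel P from A to B: encoders Q i (distributions on A),
  stochastic decoders D i y = P_i(1|y).\<close>
definition is_distr :: "'a set \<Rightarrow> ('a \<Rightarrow> real) \<Rightarrow> bool" where
  "is_distr A Q \<longleftrightarrow> (\<forall>x\<in>A. Q x \<ge> 0) \<and> (\<Sum>x\<in>A. Q x) = 1"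

definition point_mass :: "'a set \<Rightarrow> ('a \<Rightarrow> real) \<Rightarrow> bool" where
  "point_mass A Q \<longleftrightarrow> (\<exists>a\<in>A. \<forall>x\<in>A. Q x = (if x = a then 1 else 0))"

definition lam_to :: "'a set \<Rightarrow> 'b set \<Rightarrow> ('a \<Rightarrow> 'b \<Rightarrow> real) \<Rightarrow> (nat \<Rightarrow> 'a \<Rightarrow> real)
    \<Rightarrow> (nat \<Rightarrow> 'b \<Rightarrow> real) \<Rightarrow> nat \<Rightarrow> nat \<Rightarrow> real" where
  "lam_to A B P Q D i j = (\<Sum>x\<in>A. \<Sum>y\<in>B. Q i x * P x y * D j y)"

definition lam_miss :: "'a set \<Rightarrow> 'b set \<Rightarrow> ('a \<Rightarrow> 'b \<Rightarrow> real) \<Rightarrow> (nat \<Rightarrow> 'a \<Rightarrow> real)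
    \<Rightarrow> (nat \<Rightarrow> 'b \<Rightarrow> real) \<Rightarrow> nat \<Rightarrow> real" where
  "lam_miss A B P Q D i = (\<Sum>x\<in>A. \<Sum>y\<in>B. Q i x * P x y * (1 - D i y))"

definition det_dec :: "(nat \<Rightarrow> 'b set) \<Rightarrow> nat \<Rightarrow> 'b \<Rightarrow> real" where
  "det_dec Dec j y = (if y \<in> Dec j then 1 else 0)"

end

theory Submission
  imports Defs
begin

definition TT :: "nat \<Rightarrow> nat \<Rightarrow> (nat \<Rightarrow> nat) \<Rightarrow> nat list set" where
  "TT q n w = {z\<in>vecs q n. composition z = w}"

definition SS :: "nat \<Rightarrow> (nat \<Rightarrow> nat \<Rightarrow> real) \<Rightarrow> nat list \<Rightarrow> nat list \<Rightarrow> real" where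
  "SS n U x y = (\<Sum>\<sigma>\<in>{\<sigma>. \<sigma> permutes {..<n}}. \<Prod>i<n. U (x ! i) (y ! \<sigma> i))"

lemma composition_mset: "composition xs = (\<lambda>c. count (mset xs) c)"
  by (simp add: composition_def count_mset)

lemma finite_vecs: "finite (vecs q n)"
proof -
  have "vecs q n = {xs. set xs \<subseteq> {1..q} \<and> length xs = n}" by (auto simp: vecs_def)
  then show ?thesis using finite_lists_length_eq[of "{1..q}" n] by simp
qed

lemma pl_vecs:
  assumes "\<sigma> permutes {..<n}" "y \<in> vecs q n"
  shows "permute_list \<sigma> y \<in> vecs q n \<and> composition (permute_list \<sigma> y) = composition y"
  using assms by (auto simp: vecs_def composition_mset)

lemma pl_bij:
  assumes "\<sigma> permutes {..<n}"
  shows "bij_betw (permute_list \<sigma>) (TT q n w) (TT q n w)"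
proof (rule bij_betw_byWitness[where f' = "permute_list (inv \<sigma>)"])
  have i: "inv \<sigma> permutes {..<n}" using assms by (rule permutes_inv)
  show "\<forall>a\<in>TT q n w. permute_list (inv \<sigma>) (permute_list \<sigma> a) = a"
  proof
    fix a assume "a \<in> TT q n w"
    then have l: "length a = n" by (auto simp: TT_def vecs_def)
    have "permute_list (inv \<sigma>) (permute_list \<sigma> a) = permute_list (\<sigma> \<circ> inv \<sigma>) a"
      using permute_list_compose[of "inv \<sigma>" a \<sigma>] i l by simp
    also have "\<dots> = a" using permutes_inv_o(1)[OF assms] by simp
    finally show "permute_list (inv \<sigma>) (permute_list \<sigma> a) = a" .
  qed
  show "\<forall>a\<in>TT q n w. permute_list \<sigma> (permute_list (inv \<sigma>) a) = a"
  proof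
    fix a assume "a \<in> TT q n w"
    then have l: "length a = n" by (auto simp: TT_def vecs_def)
    have "permute_list \<sigma> (permute_list (inv \<sigma>) a) = permute_list (inv \<sigma> \<circ> \<sigma>) a"
      using permute_list_compose[of \<sigma> a "inv \<sigma>"] assms l by simp
    also have "\<dots> = a" using permutes_inv_o(2)[OF assms] by simp
    finally show "permute_list \<sigma> (permute_list (inv \<sigma>) a) = a" .
  qed
  show "permute_list \<sigma> ` TT q n w \<subseteq> TT q n w" using pl_vecs[OF assms] by (auto simp: TT_def)
  show "permute_list (inv \<sigma>) ` TT q n w \<subseteq> TT q n w" using pl_vecs[OF i] by (auto simp: TT_def)
qed

lemma perm_SS: "perm_chan n U x y = SS n U x y / fact n"
proof -
  have "(\<Prod>i<n. U (x ! inv \<sigma> i) (y ! i)) = (\<Prod>i<n. U (x ! i) (y ! \<sigma> i))"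
    if s: "\<sigma> permutes {..<n}" for \<sigma>
  proof -
    have "(\<Prod>i<n. U (x ! inv \<sigma> i) (y ! i)) = (\<Prod>j<n. U (x ! inv \<sigma> (\<sigma> j)) (y ! \<sigma> j))"
      using prod.reindex_bij_betw[OF permutes_imp_bij[OF s], of "\<lambda>i. U (x ! inv \<sigma> i) (y ! i)"]
      by simp
    also have "\<dots> = (\<Prod>i<n. U (x ! i) (y ! \<sigma> i))"
      using permutes_inverses(2)[OF s] by simp
    finally show ?thesis .
  qed
  then show ?thesis unfolding perm_chan_def SS_def by (simp add: field_simps)
qed

lemma SS_x:
  assumes p: "\<pi> permutes {..<n}" and l: "length x = n"
  shows "SS n U (permute_list \<pi> x) y = SS n U x y"
proof -
  have ip: "inv \<pi> permutes {..<n}" using p by (rule permutes_inv)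
  have "(\<Prod>i<n. U (permute_list \<pi> x ! i) (y ! \<sigma> i)) = (\<Prod>j<n. U (x ! j) (y ! (\<sigma> \<circ> inv \<pi>) j))"
    if s: "\<sigma> permutes {..<n}" for \<sigma>
  proof -
    have "(\<Prod>j<n. U (x ! j) (y ! (\<sigma> \<circ> inv \<pi>) j)) = (\<Prod>i<n. U (x ! \<pi> i) (y ! (\<sigma> \<circ> inv \<pi>) (\<pi> i)))"
      using prod.reindex_bij_betw[OF permutes_imp_bij[OF p], of "\<lambda>j. U (x ! j) (y ! (\<sigma> \<circ> inv \<pi>) j)"]
      by simp
    also have "\<dots> = (\<Prod>i<n. U (permute_list \<pi> x ! i) (y ! \<sigma> i))"
      using permutes_inverses(2)[OF p] permute_list_nth[of \<pi> x] p l by simp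
    finally show ?thesis by simp
  qed
  then have "SS n U (permute_list \<pi> x) y = (\<Sum>\<sigma>\<in>{\<sigma>. \<sigma> permutes {..<n}}. \<Prod>j<n. U (x ! j) (y ! (\<sigma> \<circ> inv \<pi>) j))"
    unfolding SS_def by (intro sum.cong) auto
  also have "\<dots> = SS n U x y"
    unfolding SS_def using sum_permutations_compose_right[OF ip, of "\<lambda>\<sigma>. \<Prod>j<n. U (x ! j) (y ! \<sigma> j)"]
    by simp
  finally show ?thesis .
qed

lemma SS_y:
  assumes p: "\<pi> permutes {..<n}" and l: "length y = n"
  shows "SS n U x (permute_list \<pi> y) = SS n U x y"
proof -
  have "(\<Prod>i<n. U (x ! i) (permute_list \<pi> y ! \<sigma> i)) = (\<Prod>i<n. U (x ! i) (y ! (\<pi> \<circ> \<sigma>) i))"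
    if s: "\<sigma> permutes {..<n}" for \<sigma>
    using permute_list_nth[of \<pi> y] p l permutes_in_image[OF s] by (intro prod.cong) auto
  then have "SS n U x (permute_list \<pi> y) = (\<Sum>\<sigma>\<in>{\<sigma>. \<sigma> permutes {..<n}}. \<Prod>i<n. U (x ! i) (y ! (\<pi> \<circ> \<sigma>) i))"
    unfolding SS_def by (intro sum.cong) auto
  also have "\<dots> = SS n U x y"
    unfolding SS_def using setum_permutations_compose_left[OF p, of "\<lambda>\<sigma>. \<Prod>j<n. U (x ! j) (y ! \<sigma> j)"]
    by simp
  finally show ?thesis .
qed

lemma sum_SS:
  assumes "r \<in> vecs q n"
  shows "(\<Sum>y\<in>TT q n w. SS n U r y) = fact n * (\<Sum>z\<in>TT q n w. \<Prod>i<n. U (r ! i) (z ! i))"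
proof -
  have fin: "finite (TT q n w)" using finite_vecs by (auto simp: TT_def)
  have "(\<Sum>y\<in>TT q n w. \<Prod>i<n. U (r ! i) (y ! \<sigma> i)) = (\<Sum>z\<in>TT q n w. \<Prod>i<n. U (r ! i) (z ! i))"
    if s: "\<sigma> permutes {..<n}" for \<sigma>
  proof -
    have "(\<Sum>y\<in>TT q n w. \<Prod>i<n. U (r ! i) (y ! \<sigma> i)) = (\<Sum>y\<in>TT q n w. \<Prod>i<n. U (r ! i) (permute_list \<sigma> y ! i))"
      using s by (intro sum.cong prod.cong) (auto simp: TT_def vecs_def permute_list_nth)
    also have "\<dots> = (\<Sum>z\<in>TT q n w. \<Prod>i<n. U (r ! i) (z ! i))"
      using sum.reindex_bij_betw[OF pl_bij[OF s], of "\<lambda>z. \<Prod>i<n. U (r ! i) (z ! i)" q w] by simp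
    finally show ?thesis .
  qed
  note K = this
  have "(\<Sum>y\<in>TT q n w. SS n U r y) = (\<Sum>\<sigma>\<in>{\<sigma>. \<sigma> permutes {..<n}}. \<Sum>y\<in>TT q n w. \<Prod>i<n. U (r ! i) (y ! \<sigma> i))"
    unfolding SS_def by (rule sum.swap)
  also have "\<dots> = (\<Sum>\<sigma>\<in>{\<sigma>. \<sigma> permutes {..<n}}. \<Sum>z\<in>TT q n w. \<Prod>i<n. U (r ! i) (z ! i))"
    by (rule sum.cong[OF refl]) (simp add: K)
  also have "\<dots> = fact n * (\<Sum>z\<in>TT q n w. \<Prod>i<n. U (r ! i) (z ! i))"
    using card_permutations[of "{..<n}" n] by simp
  finally show ?thesis .
qed


lemma comp_eq_perm:
  assumes "composition a = composition b" "length b = n"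
  obtains \<pi> where "\<pi> permutes {..<n}" "permute_list \<pi> b = a"
proof -
  have "mset a = mset b"
    using assms(1) unfolding composition_mset by (intro multiset_eqI) metis
  then show ?thesis using mset_eq_permutation[of a b] assms(2) that by metis
qed

lemma main_pt:
  assumes x: "x \<in> vecs q n" and y: "y \<in> vecs q n"
  shows "perm_chan n U x y =
     ncc_chan q n U (composition x) (composition y) / card (TT q n (composition y))"
proof -
  define w where "w = composition y"
  define r where "r = (SOME r. r \<in> vecs q n \<and> composition r = composition x)"
  have r: "r \<in> vecs q n \<and> composition r = composition x"
    unfolding r_def by (rule someI[where x = x]) (simp add: x)
  have lr: "length r = n" using r by (auto simp: vecs_def)
  have ly: "length y = n" using y by (auto simp: vecs_def)
  obtain \<pi> where p: "\<pi> permutes {..<n}" "permute_list \<pi> r = x"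
    using comp_eq_perm[of x r n] r lr by metis
  have Sx: "SS n U x y = SS n U r y" using SS_x[OF p(1) lr] p(2) by simp
  have yT: "y \<in> TT q n w" using y by (simp add: TT_def w_def)
  have fin: "finite (TT q n w)" using finite_vecs by (auto simp: TT_def)
  have cpos: "card (TT q n w) > 0" using fin yT by (auto simp: card_gt_0_iff)
  have const: "SS n U r y' = SS n U r y" if "y' \<in> TT q n w" for y'
  proof -
    have "composition y' = composition y" "length y' = n"
      using that by (auto simp: TT_def w_def vecs_def)
    then obtain \<rho> where "\<rho> permutes {..<n}" "permute_list \<rho> y = y'"
      using comp_eq_perm[of y' y n] ly by metis
    then show ?thesis using SS_y[of \<rho> n y U r] ly by simp
  qed
  have "card (TT q n w) * SS n U r y = (\<Sum>y'\<in>TT q n w. SS n U r y)"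
    by simp
  also have "\<dots> = (\<Sum>y'\<in>TT q n w. SS n U r y')"
    by (rule sum.cong[OF refl]) (rule const[symmetric])
  also have "\<dots> = fact n * (\<Sum>z\<in>TT q n w. \<Prod>i<n. U (r ! i) (z ! i))"
    by (rule sum_SS[OF conjunct1[OF r]])
  also have "(\<Sum>z\<in>TT q n w. \<Prod>i<n. U (r ! i) (z ! i)) = ncc_chan q n U (composition x) w"
    unfolding ncc_chan_def Let_def TT_def by (simp only: r_def[symmetric])
  finally have e: "card (TT q n w) * SS n U r y = fact n * ncc_chan q n U (composition x) w" .
  have "perm_chan n U x y = SS n U r y / fact n" using perm_SS Sx by simp
  also have "\<dots> = ncc_chan q n U (composition x) w / card (TT q n w)"
    using e cpos fact_gt_zero[of n] by (simp add: divide_simps mult.commute)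
  finally show ?thesis by (simp add: w_def)
qed

lemma avg:
  assumes x: "x \<in> vecs q n"
  shows "(\<Sum>y\<in>vecs q n. perm_chan n U x y * h y) =
    (\<Sum>w\<in>comps q n. ncc_chan q n U (composition x) w * ((\<Sum>y\<in>TT q n w. h y) / card (TT q n w)))"
proof -
  have "(\<Sum>y\<in>vecs q n. perm_chan n U x y * h y) =
     (\<Sum>w\<in>comps q n. \<Sum>y\<in>TT q n w. perm_chan n U x y * h y)"
    unfolding comps_def TT_def using finite_vecs by (rule sum.image_gen)
  also have "\<dots> = (\<Sum>w\<in>comps q n. \<Sum>y\<in>TT q n w. ncc_chan q n U (composition x) w / card (TT q n w) * h y)"
    using main_pt[OF x] by (intro sum.cong refl) (auto simp: TT_def)
  also have "\<dots> = (\<Sum>w\<in>comps q n. ncc_chan q n U (composition x) w * ((\<Sum>y\<in>TT q n w. h y) / card (TT q n w)))"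
    by (simp add: sum_distrib_left sum_divide_distrib)
  finally show ?thesis .
qed

lemma general:
  "(\<Sum>x\<in>vecs q n. \<Sum>y\<in>vecs q n. Q x * perm_chan n U x y * h y) =
   (\<Sum>t\<in>comps q n. \<Sum>w\<in>comps q n. (\<Sum>x\<in>TT q n t. Q x) * ncc_chan q n U t w *
       ((\<Sum>y\<in>TT q n w. h y) / card (TT q n w)))"
proof -
  define G where "G t = (\<Sum>w\<in>comps q n. ncc_chan q n U t w * ((\<Sum>y\<in>TT q n w. h y) / card (TT q n w)))" for t
  have "(\<Sum>x\<in>vecs q n. \<Sum>y\<in>vecs q n. Q x * perm_chan n U x y * h y) =
     (\<Sum>x\<in>vecs q n. Q x * G (composition x))"
  proof (rule sum.cong[OF refl])
    fix x assume x: "x \<in> vecs q n"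
    have "(\<Sum>y\<in>vecs q n. Q x * perm_chan n U x y * h y) = Q x * (\<Sum>y\<in>vecs q n. perm_chan n U x y * h y)"
      by (simp add: sum_distrib_left mult.assoc)
    then show "(\<Sum>y\<in>vecs q n. Q x * perm_chan n U x y * h y) = Q x * G (composition x)"
      using avg[OF x] by (simp add: G_def)
  qed
  also have "\<dots> = (\<Sum>t\<in>comps q n. \<Sum>x\<in>TT q n t. Q x * G (composition x))"
    unfolding comps_def TT_def using finite_vecs by (rule sum.image_gen)
  also have "\<dots> = (\<Sum>t\<in>comps q n. (\<Sum>x\<in>TT q n t. Q x) * G t)"
    by (intro sum.cong refl) (auto simp: TT_def sum_distrib_right)
  also have "\<dots> = (\<Sum>t\<in>comps q n. \<Sum>w\<in>comps q n. (\<Sum>x\<in>TT q n t. Q x) * ncc_chan q n U t w *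
       ((\<Sum>y\<in>TT q n w. h y) / card (TT q n w)))"
    by (simp add: G_def sum_distrib_left mult.assoc)
  finally show ?thesis .
qed

theorem lemma2:
  fixes q n L :: nat
    and U :: "nat \<Rightarrow> nat \<Rightarrow> real"
    and Q :: "nat \<Rightarrow> nat list \<Rightarrow> real"
    and Dec :: "nat \<Rightarrow> nat list set"
  assumes "q \<ge> 2" and "n \<ge> 1"
    and "row_stochastic q U"
    and "\<forall>j\<in>{1..L}. is_distr (vecs q n) (Q j)"
    and "\<forall>j\<in>{1..L}. Dec j \<subseteq> vecs q n"
  shows "\<exists>(Q' :: nat \<Rightarrow> (nat \<Rightarrow> nat) \<Rightarrow> real) (P :: nat \<Rightarrow> (nat \<Rightarrow> nat) \<Rightarrow> real).
     (\<forall>i\<in>{1..L}. is_distr (comps q n) (Q' i)) \<and>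
     (\<forall>i\<in>{1..L}. \<forall>w\<in>comps q n. 0 \<le> P i w \<and> P i w \<le> 1) \<and>
     (\<forall>i\<in>{1..L}. \<forall>j\<in>{1..L}. i \<noteq> j \<longrightarrow>
        lam_to (comps q n) (comps q n) (ncc_chan q n U) Q' P i j =
        lam_to (vecs q n) (vecs q n) (perm_chan n U) Q (det_dec Dec) i j) \<and>
     (\<forall>i\<in>{1..L}.
        lam_miss (comps q n) (comps q n) (ncc_chan q n U) Q' P i =
        lam_miss (vecs q n) (vecs q n) (perm_chan n U) Q (det_dec Dec) i) \<and>
     ((\<forall>i\<in>{1..L}. point_mass (vecs q n) (Q i)) \<longrightarrow>
        (\<forall>i\<in>{1..L}. point_mass (comps q n) (Q' i)))"
proof -
  define Q' where "Q' i t = (\<Sum>x\<in>TT q n t. Q i x)" for i t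
  define P where "P j w = (\<Sum>y\<in>TT q n w. det_dec Dec j y) / card (TT q n w)" for j w
  have finT: "finite (TT q n w)" for w using finite_vecs by (auto simp: TT_def)
  have finC: "finite (comps q n)" using finite_vecs by (simp add: comps_def)
  have cpos: "card (TT q n w) > 0" if "w \<in> comps q n" for w
    using that finT[of w] by (auto simp: comps_def TT_def card_gt_0_iff)
  have D01: "0 \<le> det_dec Dec j y \<and> det_dec Dec j y \<le> 1" for j y by (simp add: det_dec_def)
  have sumV: "(\<Sum>x\<in>vecs q n. f x) = (\<Sum>t\<in>comps q n. \<Sum>x\<in>TT q n t. f x)" for f :: "nat list \<Rightarrow> real"
    unfolding comps_def TT_def using finite_vecs by (rule sum.image_gen)
  have A: "\<forall>i\<in>{1..L}. is_distr (comps q n) (Q' i)"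
  proof
    fix i assume i: "i \<in> {1..L}"
    then have d: "is_distr (vecs q n) (Q i)" using assms(4) by blast
    have "\<forall>t\<in>comps q n. Q' i t \<ge> 0"
      using d unfolding Q'_def is_distr_def TT_def by (auto intro!: sum_nonneg)
    moreover have "(\<Sum>t\<in>comps q n. Q' i t) = 1"
      using d sumV[of "Q i"] unfolding is_distr_def Q'_def by simp
    ultimately show "is_distr (comps q n) (Q' i)" by (simp add: is_distr_def)
  qed
  have B: "\<forall>i\<in>{1..L}. \<forall>w\<in>comps q n. 0 \<le> P i w \<and> P i w \<le> 1"
  proof (intro ballI)
    fix i w assume w: "w \<in> comps q n"
    have "(\<Sum>y\<in>TT q n w. det_dec Dec i y) \<le> (\<Sum>y\<in>TT q n w. 1)"
      using D01 by (intro sum_mono) auto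
    moreover have "0 \<le> (\<Sum>y\<in>TT q n w. det_dec Dec i y)" using D01 by (intro sum_nonneg) auto
    ultimately show "0 \<le> P i w \<and> P i w \<le> 1" using cpos[OF w]
      by (simp add: P_def divide_simps)
  qed
  have C: "lam_to (comps q n) (comps q n) (ncc_chan q n U) Q' P i j =
        lam_to (vecs q n) (vecs q n) (perm_chan n U) Q (det_dec Dec) i j" for i j
    unfolding lam_to_def using general[of "Q i" n U "det_dec Dec j" q]
    by (simp add: Q'_def P_def)
  have avg1: "(\<Sum>y\<in>TT q n w. 1 - det_dec Dec i y) / card (TT q n w) = 1 - P i w"
    if w: "w \<in> comps q n" for i w
    using cpos[OF w] by (simp add: P_def sum_subtractf divide_simps)
  have M: "lam_miss (comps q n) (comps q n) (ncc_chan q n U) Q' P i =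
        lam_miss (vecs q n) (vecs q n) (perm_chan n U) Q (det_dec Dec) i" for i
    unfolding lam_miss_def using general[of "Q i" n U "\<lambda>y. 1 - det_dec Dec i y" q]
    by (simp add: Q'_def avg1 cong: sum.cong)
  have PM: "(\<forall>i\<in>{1..L}. point_mass (vecs q n) (Q i)) \<longrightarrow>
        (\<forall>i\<in>{1..L}. point_mass (comps q n) (Q' i))"
  proof (intro impI ballI)
    fix i assume h: "\<forall>i\<in>{1..L}. point_mass (vecs q n) (Q i)" and i: "i \<in> {1..L}"
    then obtain a where a: "a \<in> vecs q n" "\<forall>x\<in>vecs q n. Q i x = (if x = a then 1 else 0)"
      unfolding point_mass_def by blast
    have "Q' i t = (if t = composition a then 1 else 0)" if t: "t \<in> comps q n" for t
    proof -
      have "Q' i t = (\<Sum>x\<in>TT q n t. if x = a then 1 else 0)"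
        unfolding Q'_def using a(2) by (intro sum.cong refl) (auto simp: TT_def)
      also have "\<dots> = (if a \<in> TT q n t then 1 else 0)"
        using finT[of t] by (simp add: sum.delta')
      also have "\<dots> = (if t = composition a then 1 else 0)"
        using a(1) by (auto simp: TT_def)
      finally show ?thesis .
    qed
    moreover have "composition a \<in> comps q n" using a(1) by (simp add: comps_def)
    ultimately show "point_mass (comps q n) (Q' i)" unfolding point_mass_def by blast
  qed
  show ?thesis
    apply (rule exI[where x = Q'], rule exI[where x = P])
    using A B C M PM by blast
qed

end
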